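(* Let $n,m\ge1$, let $K_n$ be the ordered complete graph on $n$ vertices, and let $P_m$ be a path on $m$ vertices with an arbitrary total order on its vertices. Then $R_o(K_n,P_m)\le 2^{\lceil\log_2 n\rceil\cdot(\lceil\log_2 m\rceil+1)}$.
   Context: An ordered graph is a graph with a total order $\prec$ on its vertices. An ordered graph $F$ is contained in an ordered graph $H$ if there is an injective map $V(F)\to V(H)$ preserving both the vertex order and adjacency. The ordered Ramsey number $R_o(F,G)$ is the smallest $N$ such that every red/blue colouring of the edges of the ordered complete graph $K_N$ contains a blue copy of $F$ or a red copy of $G$. *)

theory Defs
  imports Complex_Main
begin

text \<open>An ordered graph on k vertices is represented by the vertex set {0..<k} with the
natural order of nat and a (symmetric) edge relation E. A red/blue colouring of the
ordered complete graph K_N is a function c, where c i j for i < j < N is the colour of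
the edge {i,j}: True = blue, False = red.\<close>

definition mono_copy :: "nat \<Rightarrow> (nat \<Rightarrow> nat \<Rightarrow> bool) \<Rightarrow> nat \<Rightarrow> (nat \<Rightarrow> nat \<Rightarrow> bool) \<Rightarrow> bool \<Rightarrow> bool" where
  "mono_copy k E N c b \<longleftrightarrow>
     (\<exists>f. (\<forall>i<k. f i < N) \<and> (\<forall>i j. i < j \<and> j < k \<longrightarrow> f i < f j) \<and>
          (\<forall>i j. i < j \<and> j < k \<and> E i j \<longrightarrow> c (f i) (f j) = b))"

definition ordered_ramsey :: "nat \<Rightarrow> (nat \<Rightarrow> nat \<Rightarrow> bool) \<Rightarrow> nat \<Rightarrow> (nat \<Rightarrow> nat \<Rightarrow> bool) \<Rightarrow> nat" where
  "ordered_ramsey k1 E1 k2 E2 =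
     (LEAST N. \<forall>c. mono_copy k1 E1 N c True \<or> mono_copy k2 E2 N c False)"

definition complete_edges :: "nat \<Rightarrow> nat \<Rightarrow> bool" where
  "complete_edges i j \<longleftrightarrow> i \<noteq> j"

text \<open>Path on m vertices visiting the vertices in the sequence s 0, s 1, ..., s (m-1)
(s a permutation of {0..<m}); the vertex order is the natural order of nat, so the
choice of s encodes an arbitrary total order on the path's vertices.\<close>

definition path_edges :: "nat \<Rightarrow> (nat \<Rightarrow> nat) \<Rightarrow> nat \<Rightarrow> nat \<Rightarrow> bool" where
  "path_edges m s i j \<longleftrightarrow> (\<exists>t. Suc t < m \<and> {i, j} = {s t, s (Suc t)})"

end

theory Submission
  imports Defs
begin

definition col :: "(nat \<Rightarrow> nat \<Rightarrow> bool) \<Rightarrow> nat \<Rightarrow> nat \<Rightarrow> bool" where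
  "col c u v = (if u < v then c u v else c v u)"

lemma col_sym: "col c u v = col c v u"
  unfolding col_def by (cases u v rule: linorder_cases) auto

definition blueS :: "(nat \<Rightarrow> nat \<Rightarrow> bool) \<Rightarrow> nat set \<Rightarrow> nat \<Rightarrow> bool" where
  "blueS c S k \<longleftrightarrow> finite S \<and> card S = k \<and> (\<forall>u\<in>S. \<forall>v\<in>S. u < v \<longrightarrow> c u v)"

definition redE :: "nat \<Rightarrow> (nat \<Rightarrow> nat) \<Rightarrow> (nat \<Rightarrow> nat \<Rightarrow> bool) \<Rightarrow> (nat \<Rightarrow> nat) \<Rightarrow> nat set \<Rightarrow> bool" where
  "redE m s c f X \<longleftrightarrow> (\<forall>i<m. f i \<in> X) \<and> (\<forall>i j. i < j \<and> j < m \<longrightarrow> f i < f j) \<and>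
     (\<forall>i j. i < j \<and> j < m \<and> path_edges m s i j \<longrightarrow> c (f i) (f j) = False)"

definition QS :: "nat \<Rightarrow> (nat \<Rightarrow> nat) \<Rightarrow> nat \<Rightarrow> nat \<Rightarrow> bool" where
  "QS m s k N \<longleftrightarrow> (\<forall>c X. finite X \<longrightarrow> N \<le> card X \<longrightarrow> (\<exists>S\<subseteq>X. blueS c S k) \<or> (\<exists>f. redE m s c f X))"

lemma redE_mono: "redE m s c f X \<Longrightarrow> X \<subseteq> Y \<Longrightarrow> redE m s c f Y"
  unfolding redE_def by blast

lemma enum_set:
  fixes X :: "nat set"
  assumes "finite X"
  shows "\<exists>h. (\<forall>i<card X. h i \<in> X) \<and> (\<forall>i j. i < j \<and> j < card X \<longrightarrow> h i < h j) \<and> h ` {..<card X} = X"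
proof -
  define xs where "xs = sorted_list_of_set X"
  have len: "length xs = card X" unfolding xs_def by simp
  have set: "set xs = X" unfolding xs_def using assms by simp
  have srt: "sorted_wrt (<) xs" unfolding xs_def by (rule strict_sorted_list_of_set)
  have a1: "(\<forall>i<card X. xs ! i \<in> X)" using len set nth_mem by auto
  have a2: "\<forall>i j. i < j \<and> j < card X \<longrightarrow> xs ! i < xs ! j"
    using sorted_wrt_nth_less[OF srt] len by auto
  have a3: "(\<lambda>i. xs ! i) ` {..<card X} = X"
  proof -
    have "(\<lambda>i. xs ! i) ` {..<length xs} = set xs" by (auto simp: in_set_conv_nth)
    then show ?thesis using set len by simp
  qed
  show ?thesis by (rule exI[of _ "\<lambda>i. xs ! i"]) (use a1 a2 a3 in blast)
qed

lemma QS_from_int: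
  assumes "\<And>c M. N \<le> M \<Longrightarrow> (\<exists>S\<subseteq>{..<M}. blueS c S k) \<or> (\<exists>f. redE m s c f {..<M})"
  shows "QS m s k N"
  unfolding QS_def
proof (intro allI impI)
  fix c :: "nat \<Rightarrow> nat \<Rightarrow> bool" and X assume fin: "finite (X::nat set)" and NX: "N \<le> card X"
  obtain h where h1: "\<forall>i<card X. h i \<in> X" and h2: "\<forall>i j. i < j \<and> j < card X \<longrightarrow> h i < h j"
    and h3: "h ` {..<card X} = X"
    using enum_set[OF fin] by blast
  have hinj: "inj_on h {..<card X}"
  proof (rule inj_onI)
    fix i j assume "i \<in> {..<card X}" "j \<in> {..<card X}" "h i = h j"
    then have ij: "i < card X" "j < card X" "h i = h j" by auto
    show "i = j"
    proof (rule ccontr)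
      assume "i \<noteq> j"
      then have "i < j \<or> j < i" by arith
      then have "h i < h j \<or> h j < h i" using h2 ij(1,2) by blast
      then show False using ij(3) by simp
    qed
  qed
  have hlt: "i < j" if "i < card X" "j < card X" "h i < h j" for i j
  proof (cases i j rule: linorder_cases)
    case greater
    then have "h j < h i" using h2 that(1) by blast
    then show ?thesis using that(3) by simp
  next
    case equal then show ?thesis using that by simp
  qed
  define c' where "c' u v = c (h u) (h v)" for u v
  from assms[OF NX, of c'] show "(\<exists>S\<subseteq>X. blueS c S k) \<or> (\<exists>f. redE m s c f X)"
  proof
    assume "\<exists>S\<subseteq>{..<card X}. blueS c' S k"
    then obtain S where S: "S \<subseteq> {..<card X}" "blueS c' S k" by blast
    have "h ` S \<subseteq> X" using S h1 by auto
    moreover have "blueS c (h ` S) k"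
      unfolding blueS_def
    proof (intro conjI ballI impI)
      show "finite (h ` S)" using S unfolding blueS_def by auto
      have "inj_on h S" using inj_on_subset[OF hinj S(1)] .
      then have "card (h ` S) = card S" by (rule card_image)
      then show "card (h ` S) = k" using S(2) unfolding blueS_def by simp
    next
      fix u v assume "u \<in> h ` S" "v \<in> h ` S" "u < v"
      then obtain i j where "i \<in> S" "j \<in> S" "u = h i" "v = h j" by blast
      then have "i < card X" "j < card X" using S(1) by auto
      then have "i < j" using hlt \<open>u < v\<close> \<open>u = h i\<close> \<open>v = h j\<close> by blast
      then have "c' i j" using S(2) \<open>i \<in> S\<close> \<open>j \<in> S\<close> unfolding blueS_def by blast
      then show "c u v" unfolding c'_def using \<open>u = h i\<close> \<open>v = h j\<close> by simp
    qed
    ultimately show ?thesis by blast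
  next
    assume "\<exists>f. redE m s c' f {..<card X}"
    then obtain f where f: "redE m s c' f {..<card X}" by blast
    have f1: "\<forall>i<m. f i < card X" and f2: "\<forall>i j. i < j \<and> j < m \<longrightarrow> f i < f j"
      and f3: "\<forall>i j. i < j \<and> j < m \<and> path_edges m s i j \<longrightarrow> c' (f i) (f j) = False"
      using f unfolding redE_def by auto
    have "redE m s c (h \<circ> f) X"
      unfolding redE_def
    proof (intro conjI allI impI)
      fix i assume "i < m" then show "(h \<circ> f) i \<in> X" using f1 h1 by simp
    next
      fix i j assume "i < j \<and> j < m" then show "(h \<circ> f) i < (h \<circ> f) j"
        using f1 f2 h2 by simp
    next
      fix i j assume "i < j \<and> j < m \<and> path_edges m s i j"
      then show "c ((h \<circ> f) i) ((h \<circ> f) j) = False" using f3 unfolding c'_def by simp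
    qed
    then show ?thesis by blast
  qed
qed

lemma step_int:
  fixes c :: "nat \<Rightarrow> nat \<Rightarrow> bool"
  assumes bij: "bij_betw s {..<m} {..<m}" and N1: "1 \<le> N" and IH: "QS m s k N"
    and MM: "2 * m * N \<le> M"
  shows "(\<exists>S\<subseteq>{..<M}. blueS c S (2 * k)) \<or> (\<exists>f. redE m s c f {..<M})"
proof (rule ccontr)
  assume "\<not> ?thesis"
  then have noB: "\<not> (\<exists>S\<subseteq>{..<M}. blueS c S (2 * k))" and noR: "\<And>f. \<not> redE m s c f {..<M}"
    by auto
  have blueA: "\<exists>S\<subseteq>A. blueS c S k" if "A \<subseteq> {..<M}" "N \<le> card A" for A
  proof -
    have fA: "finite A" using that(1) finite_subset by blast
    have "(\<exists>S\<subseteq>A. blueS c S k) \<or> (\<exists>f. redE m s c f A)"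
      using IH fA that(2) unfolding QS_def by blast
    moreover have "\<not> (\<exists>f. redE m s c f A)" using noR redE_mono that(1) by blast
    ultimately show ?thesis by blast
  qed
  have smallD: "card {v \<in> {..<M} - A. \<forall>u\<in>A. col c u v} < N" if hA: "A \<subseteq> {..<M}" "N \<le> card A" for A
  proof (rule ccontr)
    define D where "D = {v \<in> {..<M} - A. \<forall>u\<in>A. col c u v}"
    assume "\<not> card {v \<in> {..<M} - A. \<forall>u\<in>A. col c u v} < N"
    then have "N \<le> card D" unfolding D_def by simp
    moreover have "D \<subseteq> {..<M}" unfolding D_def by auto
    ultimately obtain S2 where S2: "S2 \<subseteq> D" "blueS c S2 k" using blueA[of D] by blast
    obtain S1 where S1: "S1 \<subseteq> A" "blueS c S1 k" using blueA[OF hA] by blast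
    have disj: "S1 \<inter> S2 = {}" using S1(1) S2(1) unfolding D_def by auto
    have "blueS c (S1 \<union> S2) (2 * k)"
      unfolding blueS_def
    proof (intro conjI ballI impI)
      show "finite (S1 \<union> S2)" using S1 S2 unfolding blueS_def by auto
      have f1: "finite S1" "card S1 = k" using S1(2) unfolding blueS_def by auto
      have f2: "finite S2" "card S2 = k" using S2(2) unfolding blueS_def by auto
      have "card (S1 \<union> S2) = card S1 + card S2" using card_Un_disjoint[OF f1(1) f2(1) disj] .
      then show "card (S1 \<union> S2) = 2 * k" using f1(2) f2(2) by simp
    next
      fix u v assume u: "u \<in> S1 \<union> S2" and v: "v \<in> S1 \<union> S2" and uv: "u < v"
      show "c u v"
      proof (cases "u \<in> S1")
        case True
        show ?thesis
        proof (cases "v \<in> S1")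
          case True then show ?thesis using \<open>u \<in> S1\<close> S1(2) uv unfolding blueS_def by blast
        next
          case False
          then have "v \<in> D" using v S2(1) by auto
          then have "col c u v" using \<open>u \<in> S1\<close> S1(1) unfolding D_def by blast
          then show ?thesis using uv unfolding col_def by simp
        qed
      next
        case False
        then have uD: "u \<in> D" using u S2(1) by auto
        show ?thesis
        proof (cases "v \<in> S1")
          case True
          then have "col c v u" using uD S1(1) unfolding D_def by blast
          then show ?thesis using uv unfolding col_def by simp
        next
          case False
          then have "v \<in> S2" using v by auto
          moreover have "u \<in> S2" using u \<open>u \<notin> S1\<close> by auto
          ultimately show ?thesis using S2(2) uv unfolding blueS_def by blast
        qed
      qed
    qed
    moreover have "S1 \<union> S2 \<subseteq> {..<M}" using S1(1) S2(1) hA(1) \<open>D \<subseteq> {..<M}\<close> by auto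
    ultimately have "\<exists>S\<subseteq>{..<M}. blueS c S (2 * k)" by blast
    then show False using noB by simp
  qed
  define L where "L = 2 * N"
  define I where "I r = {r * L..<r * L + L}" for r
  define C where "C t = {v. \<exists>w. w t = v \<and> (\<forall>i\<le>t. w i \<in> I (s i)) \<and>
      (\<forall>i<t. col c (w i) (w (Suc i)) = False)}" for t
  have sm: "s t < m" if "t < m" for t using bij that bij_betwE by blast
  have sinj: "inj_on s {..<m}" using bij bij_betw_def by blast
  have Isub: "I r \<subseteq> {..<M}" if "r < m" for r
  proof -
    have "r * L + L = Suc r * L" by simp
    also have "\<dots> \<le> m * L" using that by (intro mult_le_mono1) simp
    also have "\<dots> \<le> M" using MM unfolding L_def by simp
    finally show ?thesis unfolding I_def by auto
  qed
  have Icard: "card (I r) = L" for r unfolding I_def by simp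
  have Ilt: "x < y" if "r < r'" "x \<in> I r" "y \<in> I r'" for r r' x y
  proof -
    have "x < r * L + L" using that(2) unfolding I_def by simp
    also have "r * L + L = Suc r * L" by simp
    also have "\<dots> \<le> r' * L" using that(1) by (intro mult_le_mono1) simp
    also have "\<dots> \<le> y" using that(3) unfolding I_def by simp
    finally show ?thesis .
  qed
  have Idisj: "I r \<inter> I r' = {}" if "r \<noteq> r'" for r r'
  proof -
    { fix x assume "x \<in> I r" "x \<in> I r'"
      moreover have "r < r' \<or> r' < r" using that by arith
      ultimately have False using Ilt[of r r' x x] Ilt[of r' r x x] by auto }
    then show ?thesis by blast
  qed
  have Csub: "C t \<subseteq> I (s t)" for t unfolding C_def by auto
  have Cbig: "N \<le> card (C t)" if "t < m" for t
    using that
  proof (induction t)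
    case 0
    have "I (s 0) \<subseteq> C 0"
    proof
      fix v assume "v \<in> I (s 0)"
      then show "v \<in> C 0" unfolding C_def by (intro CollectI exI[of _ "\<lambda>_. v"]) auto
    qed
    then have "I (s 0) = C 0" using Csub by blast
    then have "card (C 0) = 2 * N" using Icard[of "s 0"] unfolding L_def by simp
    then show ?case by simp
  next
    case (Suc t)
    then have tm: "t < m" by simp
    have A1: "C t \<subseteq> {..<M}" using Csub Isub sm tm by blast
    have A2: "N \<le> card (C t)" using Suc tm by simp
    define D where "D = {v \<in> {..<M} - C t. \<forall>u\<in>C t. col c u v}"
    have Dc: "card D < N" unfolding D_def using smallD[OF A1 A2] .
    have neq: "s t \<noteq> s (Suc t)" using sinj tm Suc.prems unfolding inj_on_def by fastforce
    have "I (s (Suc t)) - D \<subseteq> C (Suc t)"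
    proof
      fix v assume v: "v \<in> I (s (Suc t)) - D"
      have vM: "v \<in> {..<M}" using v Isub sm Suc.prems by blast
      have vC: "v \<notin> C t" using v Csub Idisj[OF neq] by blast
      then obtain u where u: "u \<in> C t" "\<not> col c u v" using v vM unfolding D_def by blast
      then obtain w where w: "w t = u" "\<forall>i\<le>t. w i \<in> I (s i)" "\<forall>i<t. col c (w i) (w (Suc i)) = False"
        unfolding C_def by blast
      define w' where "w' = w(Suc t := v)"
      have "\<forall>i\<le>Suc t. w' i \<in> I (s i)"
        using w(2) v unfolding w'_def by (auto simp: le_Suc_eq)
      moreover have "\<forall>i<Suc t. col c (w' i) (w' (Suc i)) = False"
        using w(1,3) u(2) unfolding w'_def by (auto simp: less_Suc_eq)
      moreover have "w' (Suc t) = v" unfolding w'_def by simp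
      ultimately show "v \<in> C (Suc t)" unfolding C_def by blast
    qed
    moreover have "finite (C (Suc t))" using Csub[of "Suc t"] finite_subset unfolding I_def by blast
    ultimately have "card (I (s (Suc t)) - D) \<le> card (C (Suc t))" by (rule card_mono[rotated])
    moreover have "card (I (s (Suc t))) \<le> card (I (s (Suc t)) - D) + card D"
    proof -
      have "I (s (Suc t)) \<subseteq> (I (s (Suc t)) - D) \<union> D" by blast
      then have "card (I (s (Suc t))) \<le> card ((I (s (Suc t)) - D) \<union> D)"
        by (rule card_mono[rotated]) (auto simp: D_def I_def)
      also have "\<dots> \<le> card (I (s (Suc t)) - D) + card D" by (rule card_Un_le)
      finally show ?thesis .
    qed
    ultimately show ?case using Icard Dc unfolding L_def by simp
  qed
  have m1: "0 < m"
  proof (rule ccontr)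
    assume "\<not> 0 < m"
    then have "redE m s c id {..<M}" unfolding redE_def by simp
    then show False using noR by blast
  qed
  have "C (m - 1) \<noteq> {}" using Cbig[of "m - 1"] m1 N1 by auto
  then obtain w where w: "\<forall>i\<le>m - 1. w i \<in> I (s i)" "\<forall>i<m - 1. col c (w i) (w (Suc i)) = False"
    unfolding C_def by blast
  define g where "g r = w (inv_into {..<m} s r)" for r
  have ginv: "g (s t) = w t" if "t < m" for t
    unfolding g_def using inv_into_f_f[OF sinj] that by simp
  have gI: "g r \<in> I r" if "r < m" for r
  proof -
    have "r \<in> s ` {..<m}" using bij that unfolding bij_betw_def by simp
    then have "inv_into {..<m} s r \<in> {..<m}" by (rule inv_into_into)
    moreover have "s (inv_into {..<m} s r) = r" using \<open>r \<in> s ` {..<m}\<close> by (rule f_inv_into_f)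
    ultimately have "inv_into {..<m} s r \<le> m - 1" "s (inv_into {..<m} s r) = r" by auto
    then show ?thesis using w(1) unfolding g_def by metis
  qed
  have "redE m s c g {..<M}"
    unfolding redE_def
  proof (intro conjI allI impI)
    fix i assume "i < m" then show "g i \<in> {..<M}" using gI Isub by blast
  next
    fix i j assume ij: "i < j \<and> j < m"
    then have "g i \<in> I i" "g j \<in> I j" using gI by auto
    then show "g i < g j" using Ilt ij by blast
  next
    fix i j assume ij: "i < j \<and> j < m \<and> path_edges m s i j"
    then obtain t where t: "Suc t < m" "{i, j} = {s t, s (Suc t)}" unfolding path_edges_def by blast
    have "col c (w t) (w (Suc t)) = False" using w(2) t(1) by simp
    then have red: "col c (g (s t)) (g (s (Suc t))) = False" using ginv t(1) by simp
    have "g i \<in> I i" "g j \<in> I j" using gI ij by auto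
    then have "g i < g j" using Ilt ij by blast
    then have "c (g i) (g j) = col c (g i) (g j)" unfolding col_def by simp
    also have "\<dots> = False"
    proof -
      have "(i = s t \<and> j = s (Suc t)) \<or> (i = s (Suc t) \<and> j = s t)"
        using t(2) by (simp add: doubleton_eq_iff)
      then show ?thesis using red col_sym[of c "g i" "g j"] by auto
    qed
    finally show "c (g i) (g j) = False" .
  qed
  then show False using noR by blast
qed

lemma QS_base: "QS m s 1 1"
  unfolding QS_def
proof (intro allI impI)
  fix c :: "nat \<Rightarrow> nat \<Rightarrow> bool" and X :: "nat set"
  assume "finite X" "1 \<le> card X"
  then obtain x where "x \<in> X" by (metis card.empty ex_in_conv not_one_le_zero)
  then have "{x} \<subseteq> X" "blueS c {x} 1" unfolding blueS_def by auto
  then show "(\<exists>S\<subseteq>X. blueS c S 1) \<or> (\<exists>f. redE m s c f X)" by blast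
qed

lemma QS_step:
  assumes bij: "bij_betw s {..<m} {..<m}" and N1: "1 \<le> N" and IH: "QS m s k N"
  shows "QS m s (2 * k) (2 * m * N)"
  by (rule QS_from_int) (rule step_int[OF bij N1 IH])

lemma QS_pow:
  assumes bij: "bij_betw s {..<m} {..<m}" and m1: "1 \<le> m"
  shows "QS m s (2 ^ a) ((2 * m) ^ a)"
proof (induction a)
  case 0 then show ?case using QS_base by simp
next
  case (Suc a)
  have "1 \<le> (2 * m) ^ a" using m1 by simp
  from QS_step[OF bij this Suc.IH] show ?case by (simp add: mult.assoc)
qed

lemma log_bound:
  assumes "1 \<le> n"
  shows "n \<le> 2 ^ nat \<lceil>log 2 (real n)\<rceil>"
proof -
  have l0: "0 \<le> log 2 (real n)" using assms by simp
  have "real n = 2 powr log 2 (real n)" using assms by simp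
  also have "\<dots> \<le> 2 powr (real (nat \<lceil>log 2 (real n)\<rceil>))"
  proof (rule powr_mono)
    have "0 \<le> \<lceil>log 2 (real n)\<rceil>" using l0 by simp
    then have "real (nat \<lceil>log 2 (real n)\<rceil>) = real_of_int \<lceil>log 2 (real n)\<rceil>" by simp
    then show "log 2 (real n) \<le> real (nat \<lceil>log 2 (real n)\<rceil>)" by simp
  qed simp
  also have "\<dots> = 2 ^ nat \<lceil>log 2 (real n)\<rceil>" by (simp add: powr_realpow)
  finally have "real n \<le> real (2 ^ nat \<lceil>log 2 (real n)\<rceil>)" by simp
  then show ?thesis by linarith
qed

theorem theoremt:
  fixes n m :: nat and s :: "nat \<Rightarrow> nat"
  assumes "n \<ge> 1" and "m \<ge> 1" and "bij_betw s {..<m} {..<m}"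
  shows "ordered_ramsey n complete_edges m (path_edges m s)
           \<le> 2 ^ (nat \<lceil>log 2 (real n)\<rceil> * (nat \<lceil>log 2 (real m)\<rceil> + 1))"
proof -
  define a where "a = nat \<lceil>log 2 (real n)\<rceil>"
  define b where "b = nat \<lceil>log 2 (real m)\<rceil>"
  define N0 :: nat where "N0 = 2 ^ (a * (b + 1))"
  have na: "n \<le> 2 ^ a" unfolding a_def using log_bound assms(1) .
  have mb: "m \<le> 2 ^ b" unfolding b_def using log_bound assms(2) .
  have QSa: "QS m s (2 ^ a) ((2 * m) ^ a)" using QS_pow assms(3,2) .
  have "(2 * m) ^ a \<le> (2 * 2 ^ b) ^ a" using mb by (intro power_mono) auto
  also have "\<dots> = N0" unfolding N0_def by (simp add: power_mult[symmetric] power_add mult.commute)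
  finally have leN0: "(2 * m) ^ a \<le> N0" .
  have "\<forall>c. mono_copy n complete_edges N0 c True \<or> mono_copy m (path_edges m s) N0 c False"
  proof
    fix c :: "nat \<Rightarrow> nat \<Rightarrow> bool"
    have "(\<exists>S\<subseteq>{..<N0}. blueS c S (2 ^ a)) \<or> (\<exists>f. redE m s c f {..<N0})"
      using QSa leN0 unfolding QS_def by simp
    then show "mono_copy n complete_edges N0 c True \<or> mono_copy m (path_edges m s) N0 c False"
    proof
      assume "\<exists>S\<subseteq>{..<N0}. blueS c S (2 ^ a)"
      then obtain S where S: "S \<subseteq> {..<N0}" "blueS c S (2 ^ a)" by blast
      then have "finite S" "n \<le> card S" using na unfolding blueS_def by auto
      then obtain S' where S': "S' \<subseteq> S" "card S' = n" by (meson obtain_subset_with_card_n)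
      have fS': "finite S'" using S' \<open>finite S\<close> finite_subset by blast
      obtain h where h1: "\<forall>i<card S'. h i \<in> S'" and h2: "\<forall>i j. i < j \<and> j < card S' \<longrightarrow> h i < h j"
        using enum_set[OF fS'] by blast
      have "mono_copy n complete_edges N0 c True"
        unfolding mono_copy_def
      proof (intro exI conjI allI impI)
        fix i assume "i < n" then show "h i < N0" using h1 S' S(1) by auto
      next
        fix i j assume "i < j \<and> j < n" then show "h i < h j" using h2 S' by auto
      next
        fix i j assume ij: "i < j \<and> j < n \<and> complete_edges i j"
        then have "h i \<in> S" "h j \<in> S" "h i < h j" using h1 h2 S' by auto
        then show "c (h i) (h j) = True" using S(2) unfolding blueS_def by blast
      qed
      then show ?thesis by blast
    next
      assume "\<exists>f. redE m s c f {..<N0}"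
      then show ?thesis unfolding redE_def mono_copy_def by auto
    qed
  qed
  then have "ordered_ramsey n complete_edges m (path_edges m s) \<le> N0"
    unfolding ordered_ramsey_def by (rule Least_le)
  then show ?thesis unfolding N0_def a_def b_def .
qed

end
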